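(* There exist solutions $u\in C(G^h)$ of $F^{W,h}[u](x)=0$ for all $x\in G^h$, and they are fixed points of the map $T:C(G^h)\to C(G^h)$ given by $$T(u)(x)=\min_{v\in\mathcal{D}^W}\min\Big(g(x),\ \frac{u(x+hv)+u(x-hv)}{2}\Big)\ \ (x\in G^h_V),\qquad T(u)(x)=g(x)\ \ (x\in\partial G^h).$$
   Context: Let $\Omega\subset D=[-1,1]^n$, $h>0$, $g\in C(G^h)$. Grid: $G^h=\{x\in h\mathbb{Z}^n: x\in D\}$, $G^h_V=\Omega\cap G^h$, $\partial G^h=G^h\setminus G^h_V$; $C(G^h)$ is the set of functions $G^h\to\mathbb{R}$. A grid direction set $\mathcal{D}^W$ is a finite set of nonzero vectors of $\mathbb{Z}^n$ spanning $\mathbb{R}^n$ and closed under $v\mapsto-v$; $h$ is assumed small enough that $x\pm hv\in G^h$ for all $x\in G^h_V$, $v\in\mathcal{D}^W$. For $v\in\mathcal{D}^W$, $D^h_{vv}u(x)=\frac{u(x+hv)-2u(x)+u(x-hv)}{h^2\|v\|^2}$ ($x\in G^h_V$), $\lambda^h_{\mathcal{D}^W}[u](x)=\min_{v\in\mathcal{D}^W}D^h_{vv}u(x)$, and $F^{W,h}[u](x)=\max\{u(x)-g(x),-\lambda^h_{\mathcal{D}^W}[u](x)\}$ for $x\in G^h_V$, $F^{W,h}[u](x)=u(x)-g(x)$ for $x\in\partial G^h$. *)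

theory Defs
  imports "HOL-Analysis.Analysis"
begin

definition cubeD :: "(real ^ 'n) set" where
  "cubeD = {x. \<forall>i. -1 \<le> x $ i \<and> x $ i \<le> 1}"

definition grid :: "real \<Rightarrow> (real ^ 'n) set" where
  "grid h = {x \<in> cubeD. \<forall>i. \<exists>k::int. x $ i = h * of_int k}"

definition gridV :: "(real ^ 'n) set \<Rightarrow> real \<Rightarrow> (real ^ 'n) set" where
  "gridV \<Omega> h = \<Omega> \<inter> grid h"

definition gridB :: "(real ^ 'n) set \<Rightarrow> real \<Rightarrow> (real ^ 'n) set" where
  "gridB \<Omega> h = grid h - gridV \<Omega> h"

definition grid_direction_set :: "(real ^ 'n) set \<Rightarrow> bool" where
  "grid_direction_set DW \<longleftrightarrow> finite DW \<and>
     (\<forall>v\<in>DW. v \<noteq> 0 \<and> (\<forall>i. v $ i \<in> \<int>)) \<and>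
     span DW = UNIV \<and> (\<forall>v\<in>DW. - v \<in> DW)"

definition Dvv :: "real \<Rightarrow> (real ^ 'n \<Rightarrow> real) \<Rightarrow> real ^ 'n \<Rightarrow> real ^ 'n \<Rightarrow> real" where
  "Dvv h u x v = (u (x + h *\<^sub>R v) - 2 * u x + u (x - h *\<^sub>R v)) / (h\<^sup>2 * (norm v)\<^sup>2)"

definition lambdaW :: "(real ^ 'n) set \<Rightarrow> real \<Rightarrow> (real ^ 'n \<Rightarrow> real) \<Rightarrow> real ^ 'n \<Rightarrow> real" where
  "lambdaW DW h u x = Min ((\<lambda>v. Dvv h u x v) ` DW)"

definition FWh :: "(real ^ 'n) set \<Rightarrow> (real ^ 'n) set \<Rightarrow> real \<Rightarrow> (real ^ 'n \<Rightarrow> real)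
    \<Rightarrow> (real ^ 'n \<Rightarrow> real) \<Rightarrow> real ^ 'n \<Rightarrow> real" where
  "FWh \<Omega> DW h g u x =
     (if x \<in> gridV \<Omega> h then max (u x - g x) (- lambdaW DW h u x) else u x - g x)"

definition Tmap :: "(real ^ 'n) set \<Rightarrow> (real ^ 'n) set \<Rightarrow> real \<Rightarrow> (real ^ 'n \<Rightarrow> real)
    \<Rightarrow> (real ^ 'n \<Rightarrow> real) \<Rightarrow> real ^ 'n \<Rightarrow> real" where
  "Tmap \<Omega> DW h g u x =
     (if x \<in> gridV \<Omega> h
      then Min ((\<lambda>v. min (g x) ((u (x + h *\<^sub>R v) + u (x - h *\<^sub>R v)) / 2)) ` DW)
      else g x)"

end

theory Submission
  imports Defs
begin

lemma grid_finite:
  assumes h: "h > 0"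
  shows "finite (grid h :: (real ^ 'n) set)"
proof -
  define N where "N = \<lceil>1/h\<rceil>"
  define A where "A = (\<lambda>k::int. h * of_int k) ` {-N..N}"
  have fA: "finite A" unfolding A_def by simp
  have sub: "grid h \<subseteq> (\<lambda>f. vec_lambda f) ` (PiE UNIV (\<lambda>_::'n. A))"
  proof
    fix x :: "real ^ 'n" assume x: "x \<in> grid h"
    have "\<forall>i. x $ i \<in> A"
    proof
      fix i
      from x obtain k :: int where k: "x $ i = h * of_int k" unfolding grid_def by blast
      from x have b: "-1 \<le> x $ i \<and> x $ i \<le> 1" unfolding grid_def cubeD_def by blast
      have "\<bar>h * of_int k\<bar> \<le> 1" using b k by auto
      hence "\<bar>of_int k\<bar> \<le> 1/h" using h by (simp add: abs_mult field_simps)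
      hence "\<bar>k\<bar> \<le> N" unfolding N_def by linarith
      hence "k \<in> {-N..N}" by auto
      thus "x $ i \<in> A" unfolding A_def using k by blast
    qed
    hence "(\<lambda>i. x $ i) \<in> PiE UNIV (\<lambda>_::'n. A)" by auto
    moreover have "x = vec_lambda (\<lambda>i. x $ i)" by simp
    ultimately show "x \<in> (\<lambda>f. vec_lambda f) ` (PiE UNIV (\<lambda>_::'n. A))" by blast
  qed
  show ?thesis by (rule finite_subset[OF sub]) (simp add: fA finite_PiE)
qed

lemma Min_eq_iff2:
  fixes A :: "real set"
  assumes "finite A" "A \<noteq> {}"
  shows "Min A = y \<longleftrightarrow> (\<forall>a\<in>A. y \<le> a) \<and> (\<exists>a\<in>A. a \<le> y)"
proof -
  have "Min A = y \<longleftrightarrow> Min A \<le> y \<and> y \<le> Min A" by auto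
  also have "\<dots> \<longleftrightarrow> (\<exists>a\<in>A. a \<le> y) \<and> (\<forall>a\<in>A. y \<le> a)"
    using assms by (simp add: Min_le_iff Min_ge_iff)
  finally show ?thesis by blast
qed

lemma key:
  fixes DW :: "(real ^ 'n) set"
  assumes fin: "finite DW" and ne: "DW \<noteq> {}" and nz: "\<forall>v\<in>DW. v \<noteq> 0"
    and h: "h > 0" and xV: "x \<in> gridV \<Omega> h"
  shows "FWh \<Omega> DW h g u x = 0 \<longleftrightarrow> Tmap \<Omega> DW h g u x = u x"
proof -
  define a where "a = (\<lambda>v. (u (x + h *\<^sub>R v) + u (x - h *\<^sub>R v)) / 2)"
  have pos: "\<And>v. v \<in> DW \<Longrightarrow> h\<^sup>2 * (norm v)\<^sup>2 > 0" using nz h by auto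
  have D: "\<And>v. Dvv h u x v = 2 * (a v - u x) / (h\<^sup>2 * (norm v)\<^sup>2)"
    by (simp add: Dvv_def a_def algebra_simps)
  have s1: "\<And>v. v \<in> DW \<Longrightarrow> (Dvv h u x v \<ge> 0 \<longleftrightarrow> a v \<ge> u x)"
    using pos D by (smt (verit) zero_le_divide_iff)
  have s2: "\<And>v. v \<in> DW \<Longrightarrow> (Dvv h u x v \<le> 0 \<longleftrightarrow> a v \<le> u x)"
    using pos D by (smt (verit) divide_le_0_iff)
  have T: "Tmap \<Omega> DW h g u x = Min ((\<lambda>v. min (g x) (a v)) ` DW)"
    using xV by (simp add: Tmap_def a_def)
  have F: "FWh \<Omega> DW h g u x = max (u x - g x) (- Min ((\<lambda>v. Dvv h u x v) ` DW))"
    using xV by (simp add: FWh_def lambdaW_def)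
  have T2: "Tmap \<Omega> DW h g u x = u x \<longleftrightarrow>
      (\<forall>v\<in>DW. u x \<le> min (g x) (a v)) \<and> (\<exists>v\<in>DW. min (g x) (a v) \<le> u x)"
    unfolding T using fin ne by (subst Min_eq_iff2) auto
  have M1: "(Min ((\<lambda>v. Dvv h u x v) ` DW) \<ge> 0) \<longleftrightarrow> (\<forall>v\<in>DW. a v \<ge> u x)"
    using fin ne s1 by (simp add: Min_ge_iff)
  have M2: "(Min ((\<lambda>v. Dvv h u x v) ` DW) \<le> 0) \<longleftrightarrow> (\<exists>v\<in>DW. a v \<le> u x)"
    using fin ne s2 by (simp add: Min_le_iff)
  have F2: "FWh \<Omega> DW h g u x = 0 \<longleftrightarrow>
     u x \<le> g x \<and> Min ((\<lambda>v. Dvv h u x v) ` DW) \<ge> 0 \<and>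
     (u x = g x \<or> Min ((\<lambda>v. Dvv h u x v) ` DW) \<le> 0)"
    unfolding F by (auto simp: max_def)
  obtain v0 where v0: "v0 \<in> DW" using ne by blast
  show ?thesis unfolding F2 T2 M1 M2
  proof
    assume A: "u x \<le> g x \<and> (\<forall>v\<in>DW. u x \<le> a v) \<and> (u x = g x \<or> (\<exists>v\<in>DW. a v \<le> u x))"
    show "(\<forall>v\<in>DW. u x \<le> min (g x) (a v)) \<and> (\<exists>v\<in>DW. min (g x) (a v) \<le> u x)"
    proof
      show "\<forall>v\<in>DW. u x \<le> min (g x) (a v)" using A by simp
      show "\<exists>v\<in>DW. min (g x) (a v) \<le> u x"
      proof (cases "u x = g x")
        case True thus ?thesis using v0 by (intro bexI[of _ v0]) auto
      next
        case False then obtain v where "v \<in> DW" "a v \<le> u x" using A by blast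
        thus ?thesis by (intro bexI[of _ v]) auto
      qed
    qed
  next
    assume B: "(\<forall>v\<in>DW. u x \<le> min (g x) (a v)) \<and> (\<exists>v\<in>DW. min (g x) (a v) \<le> u x)"
    then obtain v where v: "v \<in> DW" "min (g x) (a v) \<le> u x" by blast
    have "u x \<le> g x" "\<forall>v\<in>DW. u x \<le> a v" using B v0 by auto
    moreover have "u x = g x \<or> (\<exists>v\<in>DW. a v \<le> u x)"
    proof (cases "g x \<le> a v")
      case True thus ?thesis using v calculation by auto
    next
      case False thus ?thesis using v by auto
    qed
    ultimately show "u x \<le> g x \<and> (\<forall>v\<in>DW. u x \<le> a v) \<and> (u x = g x \<or> (\<exists>v\<in>DW. a v \<le> u x))" by blast
  qed
qed

theorem mainTheorem9:
  fixes \<Omega> DW :: "(real ^ 'n) set" and h :: real and g :: "real ^ 'n \<Rightarrow> real"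
  assumes "\<Omega> \<subseteq> cubeD" and "h > 0" and "grid_direction_set DW"
    and "\<forall>x\<in>gridV \<Omega> h. \<forall>v\<in>DW. x + h *\<^sub>R v \<in> grid h \<and> x - h *\<^sub>R v \<in> grid h"
  shows "(\<exists>u :: real ^ 'n \<Rightarrow> real. \<forall>x\<in>grid h. FWh \<Omega> DW h g u x = 0) \<and>
         (\<forall>u :: real ^ 'n \<Rightarrow> real. (\<forall>x\<in>grid h. FWh \<Omega> DW h g u x = 0) \<longrightarrow>
            (\<forall>x\<in>grid h. Tmap \<Omega> DW h g u x = u x))"
proof -
  note h = assms(2) and cl = assms(4)
  have fin: "finite DW" and nz: "\<forall>v\<in>DW. v \<noteq> 0" and sp: "span DW = UNIV"
    using assms(3) unfolding grid_direction_set_def by auto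
  have ne: "DW \<noteq> {}"
  proof
    assume "DW = {}"
    hence "span DW = {0}" by simp
    moreover have "(axis undefined 1 :: real ^ 'n) \<noteq> 0" by (simp add: axis_eq_0_iff)
    ultimately show False using sp by auto
  qed
  have BG: "\<And>u. (\<forall>x\<in>grid h. FWh \<Omega> DW h g u x = 0) \<longleftrightarrow> (\<forall>x\<in>grid h. Tmap \<Omega> DW h g u x = u x)"
  proof -
    fix u
    have "\<And>x::real^'n. x \<in> grid h \<Longrightarrow> FWh \<Omega> DW h g u x = 0 \<longleftrightarrow> Tmap \<Omega> DW h g u x = u x"
    proof -
      fix x :: "real^'n" assume x: "x \<in> grid h"
      show "FWh \<Omega> DW h g u x = 0 \<longleftrightarrow> Tmap \<Omega> DW h g u x = u x"
      proof (cases "x \<in> gridV \<Omega> h")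
        case True thus ?thesis using key[OF fin ne nz h True] by blast
      next
        case False thus ?thesis by (auto simp add: FWh_def Tmap_def)
      qed
    qed
    thus "(\<forall>x\<in>grid h. FWh \<Omega> DW h g u x = 0) \<longleftrightarrow> (\<forall>x\<in>grid h. Tmap \<Omega> DW h g u x = u x)"
      by blast
  qed
  have gV: "gridV \<Omega> h \<subseteq> grid h" by (auto simp: gridV_def)
  have fg: "finite (grid h :: (real^'n) set)" by (rule grid_finite[OF h])
  have z: "(0::real^'n) \<in> grid h" by (auto simp: grid_def cubeD_def)
  define c where "c = Min (g ` grid h)"
  have cle: "\<And>y. y \<in> grid h \<Longrightarrow> c \<le> g y" unfolding c_def using fg by auto
  define S where "S = {w :: real^'n \<Rightarrow> real. (\<forall>y\<in>grid h. w y \<le> g y) \<and>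
     (\<forall>y\<in>gridV \<Omega> h. \<forall>v\<in>DW. 2 * w y \<le> w (y + h *\<^sub>R v) + w (y - h *\<^sub>R v))}"
  define u where "u = (\<lambda>y. Sup ((\<lambda>w. w y) ` S))"
  have cS: "(\<lambda>_. c) \<in> S" unfolding S_def using cle by auto
  have bdd: "\<And>y. y \<in> grid h \<Longrightarrow> bdd_above ((\<lambda>w. w y) ` S)"
    unfolding S_def bdd_above_def by blast
  have upper: "\<And>y w. y \<in> grid h \<Longrightarrow> w \<in> S \<Longrightarrow> w y \<le> u y"
    unfolding u_def using bdd by (intro cSup_upper) auto
  have ug: "\<And>y. y \<in> grid h \<Longrightarrow> u y \<le> g y"
    unfolding u_def using cS by (intro cSup_least) (auto simp: S_def)
  have uS: "u \<in> S"
  proof -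
    have "\<And>y v. y \<in> gridV \<Omega> h \<Longrightarrow> v \<in> DW \<Longrightarrow> 2 * u y \<le> u (y + h *\<^sub>R v) + u (y - h *\<^sub>R v)"
    proof -
      fix y v assume y: "y \<in> gridV \<Omega> h" and v: "v \<in> DW"
      have p: "y + h *\<^sub>R v \<in> grid h" "y - h *\<^sub>R v \<in> grid h" using cl y v by auto
      have uy: "u y = Sup ((\<lambda>w. w y) ` S)" by (simp add: u_def)
      have "Sup ((\<lambda>w. w y) ` S) \<le> (u (y + h *\<^sub>R v) + u (y - h *\<^sub>R v)) / 2"
      proof (rule cSup_least)
        show "(\<lambda>w. w y) ` S \<noteq> {}" using cS by blast
      next
        fix r assume "r \<in> (\<lambda>w. w y) ` S"
        then obtain w where w: "w \<in> S" "r = w y" by blast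
        have "2 * w y \<le> w (y + h *\<^sub>R v) + w (y - h *\<^sub>R v)" using w y v unfolding S_def by blast
        moreover have "w (y + h *\<^sub>R v) \<le> u (y + h *\<^sub>R v)" "w (y - h *\<^sub>R v) \<le> u (y - h *\<^sub>R v)"
          using upper p w by auto
        ultimately show "r \<le> (u (y + h *\<^sub>R v) + u (y - h *\<^sub>R v)) / 2" using w by simp
      qed
      thus "2 * u y \<le> u (y + h *\<^sub>R v) + u (y - h *\<^sub>R v)" unfolding uy[symmetric] by simp
    qed
    thus ?thesis using ug unfolding S_def by blast
  qed
  have fixp: "\<forall>x\<in>grid h. Tmap \<Omega> DW h g u x = u x"
  proof
    fix x :: "real^'n" assume x: "x \<in> grid h"
    show "Tmap \<Omega> DW h g u x = u x"
    proof (cases "x \<in> gridV \<Omega> h")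
      case False
      define w0 where "w0 = (\<lambda>_. c)(x := g x)"
      have "w0 \<in> S" unfolding S_def w0_def using cle x False by auto
      hence "g x \<le> u x" using upper[OF x, of w0] by (simp add: w0_def)
      thus ?thesis using ug[OF x] False by (simp add: Tmap_def)
    next
      case True
      define t where "t = Min ((\<lambda>v. min (g x) ((u (x + h *\<^sub>R v) + u (x - h *\<^sub>R v)) / 2)) ` DW)"
      have Tt: "Tmap \<Omega> DW h g u x = t" using True by (simp add: Tmap_def t_def)
      have tle: "\<And>v. v \<in> DW \<Longrightarrow> t \<le> min (g x) ((u (x + h *\<^sub>R v) + u (x - h *\<^sub>R v)) / 2)"
        unfolding t_def by (rule Min_le) (use fin in auto)
      have ut: "u x \<le> t" unfolding t_def using fin ne uS True
        by (auto simp: Min_ge_iff S_def ug x) (metis mult.commute)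
      have ne1: "\<And>v. v \<in> DW \<Longrightarrow> x + h *\<^sub>R v \<noteq> x \<and> x - h *\<^sub>R v \<noteq> x"
        using nz h by auto
      define w1 where "w1 = u(x := t)"
      have wu: "\<And>y. u y \<le> w1 y" unfolding w1_def using ut by auto
      have "w1 \<in> S"
        unfolding S_def
      proof (intro CollectI conjI ballI)
        fix y :: "real^'n" assume "y \<in> grid h"
        thus "w1 y \<le> g y"
        proof (cases "y = x")
          case True
          obtain v where "v \<in> DW" using ne by blast
          thus ?thesis using tle[of v] True unfolding w1_def by auto
        next
          case False thus ?thesis using ug \<open>y \<in> grid h\<close> unfolding w1_def by auto
        qed
      next
        fix y v :: "real^'n" assume y: "y \<in> gridV \<Omega> h" and v: "v \<in> DW"
        show "2 * w1 y \<le> w1 (y + h *\<^sub>R v) + w1 (y - h *\<^sub>R v)"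
        proof (cases "y = x")
          case True
          thus ?thesis using tle[OF v] ne1[OF v] unfolding w1_def by auto
        next
          case False
          have "2 * u y \<le> u (y + h *\<^sub>R v) + u (y - h *\<^sub>R v)" using uS y v unfolding S_def by blast
          thus ?thesis using wu[of "y + h *\<^sub>R v"] wu[of "y - h *\<^sub>R v"] False
            unfolding w1_def by auto
        qed
      qed
      hence "t \<le> u x" using upper[OF x, of w1] by (simp add: w1_def)
      thus ?thesis using ut Tt by simp
    qed
  qed
  show ?thesis using BG fixp by blast
qed

end
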